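(* Let $p$ be a prime. Then: (1) every integer of the form $p_1^{2p^2-1}$ with $p_1$ prime is $p^2$-$T_0T^\ast$-perfect; (2) if $p$ is odd, every integer of the form $p_1^{(p-1)/2}\cdot p_2^{(p-1)/2}$ with distinct primes $p_1,p_2$ is $p^2$-$T_0T^\ast$-perfect; (3) every integer $n>1$ that is $p^2$-$T_0T^\ast$-perfect is of the form $p_1^{2p^2-1}$ with $p_1$ prime, or (with $p$ odd) of the form $p_1^{(p-1)/2}\cdot p_2^{(p-1)/2}$ with distinct primes $p_1,p_2$.
   Context: For a positive integer $m$, $T(m)$ denotes the product of all positive divisors of $m$, and $T^\ast(m)$ the product of all unitary divisors of $m$ (divisors $d$ with $\gcd(d,m/d)=1$). For an integer $K\ge 2$, an integer $n>1$ is called $K$-$T_0T^\ast$-perfect if $T(T^\ast(n))=n^K$. *)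

theory Defs
  imports "HOL-Computational_Algebra.Primes"
begin

definition divprod :: "nat \<Rightarrow> nat" where
  "divprod m = (\<Prod>d\<in>{d. d dvd m}. d)"

definition udivprod :: "nat \<Rightarrow> nat" where
  "udivprod m = (\<Prod>d\<in>{d. d dvd m \<and> coprime d (m div d)}. d)"

definition K_T0Tstar_perfect :: "nat \<Rightarrow> nat \<Rightarrow> bool" where
  "K_T0Tstar_perfect K n \<longleftrightarrow> 2 \<le> K \<and> 1 < n \<and> divprod (udivprod n) = n ^ K"

end

theory Submission
  imports Defs "HOL-Library.FuncSet"
begin


lemma prod_sq:
  fixes m :: nat
  assumes "m > 0" "finite S" "\<forall>d\<in>S. d dvd m" "\<forall>d\<in>S. m div d \<in> S"
  shows "(\<Prod>d\<in>S. d)^2 = m ^ card S"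
proof -
  have inv: "m div (m div d) = d" if "d \<in> S" for d
  proof -
    have "d dvd m" using assms(3) that by blast
    then obtain k where k: "m = d * k" by (rule dvdE)
    hence "d > 0" "k > 0" using assms(1) by auto
    thus ?thesis using k by simp
  qed
  have bij: "bij_betw (\<lambda>d. m div d) S S"
    by (rule bij_betw_byWitness[where f'="\<lambda>d. m div d"]) (use assms inv in auto)
  have "(\<Prod>d\<in>S. m div d) = (\<Prod>d\<in>S. d)"
    using prod.reindex_bij_betw[OF bij, of "\<lambda>d. d"] by simp
  hence "(\<Prod>d\<in>S. d)^2 = (\<Prod>d\<in>S. d) * (\<Prod>d\<in>S. m div d)" by (simp add: power2_eq_square)
  also have "\<dots> = (\<Prod>d\<in>S. d * (m div d))" by (simp add: prod.distrib)
  also have "\<dots> = (\<Prod>d\<in>S. m)" using assms(3) by (intro prod.cong) auto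
  finally show ?thesis by simp
qed

lemma coprime_mult:
  fixes a b :: nat
  assumes "a > 0" "b > 0"
  shows "coprime a b \<longleftrightarrow> (\<forall>q. prime q \<longrightarrow> multiplicity q a = 0 \<or> multiplicity q b = 0)"
proof
  assume c: "coprime a b"
  show "\<forall>q. prime q \<longrightarrow> multiplicity q a = 0 \<or> multiplicity q b = 0"
  proof (intro allI impI)
    fix q :: nat assume q: "prime q"
    show "multiplicity q a = 0 \<or> multiplicity q b = 0"
    proof (rule ccontr)
      assume "\<not> ?thesis"
      hence "q dvd a" "q dvd b" using q assms prime_multiplicity_gt_zero_iff by auto
      hence "is_unit q" using c coprime_common_divisor by blast
      thus False using q by (simp add: not_prime_unit)
    qed
  qed
next
  assume h: "\<forall>q. prime q \<longrightarrow> multiplicity q a = 0 \<or> multiplicity q b = 0"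
  show "coprime a b"
  proof (rule ccontr)
    assume "\<not> coprime a b"
    hence "gcd a b \<noteq> 1" by (simp add: coprime_iff_gcd_eq_1)
    then obtain q where q: "prime q" "q dvd gcd a b" using prime_factor_nat by blast
    hence "q dvd a" "q dvd b" by auto
    hence "multiplicity q a > 0" "multiplicity q b > 0"
      using q assms by (simp_all add: prime_multiplicity_gt_zero_iff)
    thus False using h q by auto
  qed
qed

context
  fixes m :: nat
  assumes m: "m > 0"
begin

definition E :: "(nat \<Rightarrow> nat) \<Rightarrow> nat" where
  "E f = (\<Prod>q\<in>prime_factors m. q ^ f q)"

lemma E_pos: "E f > 0"
  unfolding E_def by (intro prod_pos) (auto simp: in_prime_factors_iff prime_gt_0_nat)

lemma mult_E: "prime r \<Longrightarrow> multiplicity r (E f) = (if r \<in> prime_factors m then f r else 0)"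
  unfolding E_def by (rule multiplicity_prod_prime_powers) auto

lemma E_restrict: "E (restrict f (prime_factors m)) = E f"
  unfolding E_def by (intro prod.cong) auto

lemma dvd_repr: "d dvd m \<Longrightarrow> d = E (\<lambda>q. multiplicity q d)"
proof -
  assume d: "d dvd m"
  hence d0: "d > 0" using m by (auto intro: Nat.gr0I)
  show ?thesis
  proof (rule multiplicity_eq_nat[OF d0 E_pos])
    fix r :: nat assume r: "prime r"
    show "multiplicity r d = multiplicity r (E (\<lambda>q. multiplicity q d))"
    proof (cases "r \<in> prime_factors m")
      case True thus ?thesis using mult_E[OF r] by simp
    next
      case False
      hence "multiplicity r m = 0" using r by (auto simp: prime_factors_multiplicity)
      moreover have "multiplicity r d \<le> multiplicity r m"
        using d m by (intro dvd_imp_multiplicity_le) auto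
      ultimately show ?thesis using mult_E[OF r] False by simp
    qed
  qed
qed

lemma E_dvd: "(\<forall>q\<in>prime_factors m. f q \<le> multiplicity q m) \<Longrightarrow> E f dvd m"
  using E_pos mult_E by (intro multiplicity_le_imp_dvd) auto

lemma E_inj: "inj_on E (PiE (prime_factors m) B)"
proof (rule inj_onI)
  fix f g assume f: "f \<in> PiE (prime_factors m) B" and g: "g \<in> PiE (prime_factors m) B"
    and eq: "E f = E g"
  show "f = g"
  proof (rule PiE_ext[OF f g])
    fix q assume q: "q \<in> prime_factors m"
    hence pq: "prime q" by (auto simp: in_prime_factors_iff)
    show "f q = g q" using mult_E[OF pq, of f] mult_E[OF pq, of g] eq q by simp
  qed
qed

lemma divisors_eq: "{d. d dvd m} = E ` PiE (prime_factors m) (\<lambda>q. {0..multiplicity q m})"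
proof
  show "{d. d dvd m} \<subseteq> E ` PiE (prime_factors m) (\<lambda>q. {0..multiplicity q m})"
  proof
    fix d assume "d \<in> {d. d dvd m}"
    hence d: "d dvd m" by simp
    have "d = E (restrict (\<lambda>q. multiplicity q d) (prime_factors m))"
      by (subst E_restrict) (rule dvd_repr[OF d])
    moreover have "restrict (\<lambda>q. multiplicity q d) (prime_factors m)
       \<in> PiE (prime_factors m) (\<lambda>q. {0..multiplicity q m})"
      using d m by (auto intro!: dvd_imp_multiplicity_le)
    ultimately show "d \<in> E ` PiE (prime_factors m) (\<lambda>q. {0..multiplicity q m})" by blast
  qed
next
  show "E ` PiE (prime_factors m) (\<lambda>q. {0..multiplicity q m}) \<subseteq> {d. d dvd m}"
    using E_dvd by (auto simp: PiE_def Pi_def)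
qed

lemma card_divisors: "card {d. d dvd m} = (\<Prod>q\<in>prime_factors m. multiplicity q m + 1)"
  unfolding divisors_eq by (subst card_image[OF E_inj]) (simp add: card_PiE)

lemma mult_div:
  assumes d: "d dvd m" and q: "prime q"
  shows "multiplicity q (m div d) = multiplicity q m - multiplicity q d"
proof -
  have d0: "d \<noteq> 0" and md0: "m div d \<noteq> 0" using d m by (auto elim!: dvdE)
  have "m = d * (m div d)" using d by simp
  hence "multiplicity q m = multiplicity q d + multiplicity q (m div d)"
    using prime_elem_multiplicity_mult_distrib[of q d "m div d"] q d0 md0 by simp
  thus ?thesis by simp
qed

lemma unitary_eq: "{d. d dvd m \<and> coprime d (m div d)} =
   E ` PiE (prime_factors m) (\<lambda>q. {0, multiplicity q m})"
proof
  show "{d. d dvd m \<and> coprime d (m div d)} \<subseteq> E ` PiE (prime_factors m) (\<lambda>q. {0, multiplicity q m})"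
  proof
    fix d assume "d \<in> {d. d dvd m \<and> coprime d (m div d)}"
    hence d: "d dvd m" and c: "coprime d (m div d)" by auto
    have d0: "d > 0" using d m by (auto intro: Nat.gr0I)
    have md0: "m div d > 0" using d0 dvd_imp_le[OF d m] by (simp add: div_greater_zero_iff)
    have cm: "\<forall>q. prime q \<longrightarrow> multiplicity q d = 0 \<or> multiplicity q (m div d) = 0"
      by (rule coprime_mult[OF d0 md0, THEN iffD1, OF c])
    have "d = E (restrict (\<lambda>q. multiplicity q d) (prime_factors m))"
      by (subst E_restrict) (rule dvd_repr[OF d])
    moreover have "restrict (\<lambda>q. multiplicity q d) (prime_factors m)
       \<in> PiE (prime_factors m) (\<lambda>q. {0, multiplicity q m})"
    proof -
      have "multiplicity q d \<in> {0, multiplicity q m}" if "q \<in> prime_factors m" for q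
      proof -
        have pq: "prime q" using that by (auto simp: in_prime_factors_iff)
        have "multiplicity q d \<le> multiplicity q m" using d m by (intro dvd_imp_multiplicity_le) auto
        moreover have "multiplicity q d = 0 \<or> multiplicity q m - multiplicity q d = 0"
          using cm pq mult_div[OF d pq] by metis
        ultimately show ?thesis by auto
      qed
      thus ?thesis by auto
    qed
    ultimately show "d \<in> E ` PiE (prime_factors m) (\<lambda>q. {0, multiplicity q m})" by blast
  qed
next
  show "E ` PiE (prime_factors m) (\<lambda>q. {0, multiplicity q m}) \<subseteq> {d. d dvd m \<and> coprime d (m div d)}"
  proof
    fix d assume "d \<in> E ` PiE (prime_factors m) (\<lambda>q. {0, multiplicity q m})"
    then obtain f where f: "f \<in> PiE (prime_factors m) (\<lambda>q. {0, multiplicity q m})" and df: "d = E f"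
      by blast
    have fle: "\<forall>q\<in>prime_factors m. f q \<le> multiplicity q m"
    proof
      fix q assume "q \<in> prime_factors m"
      hence "f q \<in> {0, multiplicity q m}" using f by (simp add: PiE_iff)
      thus "f q \<le> multiplicity q m" by auto
    qed
    have d: "d dvd m" unfolding df by (rule E_dvd[OF fle])
    have d0: "d > 0" using d m by (auto intro: Nat.gr0I)
    have md0: "m div d > 0" using d0 dvd_imp_le[OF d m] by (simp add: div_greater_zero_iff)
    have "\<forall>q. prime q \<longrightarrow> multiplicity q d = 0 \<or> multiplicity q (m div d) = 0"
    proof (intro allI impI)
      fix q :: nat assume q: "prime q"
      show "multiplicity q d = 0 \<or> multiplicity q (m div d) = 0"
      proof (cases "q \<in> prime_factors m")
        case True
        hence "f q \<in> {0, multiplicity q m}" using f by (simp add: PiE_iff)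
        moreover have "multiplicity q d = f q" using mult_E[OF q, of f] df True by simp
        ultimately show ?thesis using mult_div[OF d q] by auto
      next
        case False
        thus ?thesis using mult_E[OF q, of f] df by simp
      qed
    qed
    hence "coprime d (m div d)" by (rule coprime_mult[OF d0 md0, THEN iffD2])
    thus "d \<in> {d. d dvd m \<and> coprime d (m div d)}" using d by blast
  qed
qed

lemma card_unitary: "card {d. d dvd m \<and> coprime d (m div d)} = 2 ^ card (prime_factors m)"
proof -
  have "card {d. d dvd m \<and> coprime d (m div d)} = (\<Prod>q\<in>prime_factors m. card {0, multiplicity q m})"
    unfolding unitary_eq by (subst card_image[OF E_inj]) (simp add: card_PiE)
  also have "\<dots> = (\<Prod>q\<in>prime_factors m. 2)"
    by (intro prod.cong) (auto simp: prime_factors_multiplicity)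
  finally show ?thesis by simp
qed

end



lemma divdvd:
  fixes m d :: nat assumes "m > 0" "d dvd m"
  shows "m div d dvd m" and "m div (m div d) = d"
proof -
  obtain k where k: "m = d * k" using assms(2) by (rule dvdE)
  hence "d > 0" "k > 0" using assms(1) by auto
  thus "m div d dvd m" "m div (m div d) = d" using k by simp_all
qed

lemma divprod_sq:
  assumes "m > 0"
  shows "divprod m ^ 2 = m ^ (\<Prod>q\<in>prime_factors m. multiplicity q m + 1)"
proof -
  have "divprod m ^ 2 = m ^ card {d. d dvd m}"
    unfolding divprod_def
  proof (rule prod_sq)
    show "finite {d. d dvd m}" using assms by (simp add: finite_divisors_nat)
    show "\<forall>d\<in>{d. d dvd m}. m div d \<in> {d. d dvd m}" using divdvd(1)[OF assms] by simp
  qed (use assms in simp_all)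
  thus ?thesis using card_divisors[OF assms] by simp
qed

lemma udivprod_sq:
  assumes "m > 0"
  shows "udivprod m ^ 2 = m ^ (2 ^ card (prime_factors m))"
proof -
  have inv: "m div (m div d) = d" if h: "d dvd m" for d
  proof -
    obtain k where k: "m = d * k" using h by (rule dvdE)
    hence "d > 0" "k > 0" using assms by auto
    thus ?thesis using k by simp
  qed
  have "udivprod m ^ 2 = m ^ card {d. d dvd m \<and> coprime d (m div d)}"
    unfolding udivprod_def
  proof (rule prod_sq)
    show "finite {d. d dvd m \<and> coprime d (m div d)}"
      using assms by (auto intro: finite_subset[OF _ finite_divisors_nat[of m]])
    show "\<forall>d\<in>{d. d dvd m \<and> coprime d (m div d)}. m div d \<in> {d. d dvd m \<and> coprime d (m div d)}"
    proof
      fix d assume "d \<in> {d. d dvd m \<and> coprime d (m div d)}"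
      hence d: "d dvd m" and c: "coprime d (m div d)" by simp_all
      have "coprime (m div d) (m div (m div d))" using c divdvd(2)[OF assms d] by (simp add: coprime_commute)
      thus "m div d \<in> {d. d dvd m \<and> coprime d (m div d)}" using divdvd(1)[OF assms d] by simp
    qed
  qed (use assms in auto)
  thus ?thesis using card_unitary[OF assms] by simp
qed

lemma pf_nonempty:
  fixes n :: nat assumes "n > 1" shows "prime_factors n \<noteq> {}"
proof -
  obtain q where "prime q" "q dvd n" using prime_factor_nat[of n] assms by auto
  thus ?thesis using assms by (auto simp: prime_factors_dvd)
qed

lemma udivprod_eq:
  fixes n :: nat assumes "n > 1"
  shows "udivprod n = n ^ (2 ^ (card (prime_factors n) - 1))"
proof -
  have "card (prime_factors n) \<noteq> 0" using pf_nonempty[OF assms] by simp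
  then obtain j where k: "card (prime_factors n) = Suc j" using not0_implies_Suc by blast
  have e: "(2::nat) ^ card (prime_factors n) = 2 ^ j * 2" using k by simp
  have "udivprod n ^ 2 = n ^ (2 ^ card (prime_factors n))" using udivprod_sq[of n] assms by linarith
  also have "\<dots> = (n ^ (2 ^ j)) ^ 2" by (simp only: e power_mult)
  finally have "udivprod n = n ^ (2 ^ j)" using power2_eq_iff_nonneg by blast
  thus ?thesis using k by simp
qed

lemma pf_pow:
  fixes n :: nat assumes "n > 0" "a > 0"
  shows "prime_factors (n ^ a) = prime_factors n"
    and "prime q \<Longrightarrow> multiplicity q (n ^ a) = a * multiplicity q n"
proof -
  show m: "prime q \<Longrightarrow> multiplicity q (n ^ a) = a * multiplicity q n" for q
    using assms by (intro prime_elem_multiplicity_power_distrib) auto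
  show "prime_factors (n ^ a) = prime_factors n"
    unfolding prime_factors_multiplicity using m assms by auto
qed

lemma key:
  fixes n K :: nat assumes "n > 1"
  shows "divprod (udivprod n) = n ^ K \<longleftrightarrow>
     2 ^ (card (prime_factors n) - 1) * (\<Prod>q\<in>prime_factors n. 2 ^ (card (prime_factors n) - 1) * multiplicity q n + 1) = 2 * K"
proof -
  define c :: nat where "c = 2 ^ (card (prime_factors n) - 1)"
  define A where "A = (\<Prod>q\<in>prime_factors n. c * multiplicity q n + 1)"
  have c0: "c > 0" by (simp add: c_def)
  have t: "udivprod n = n ^ c" using udivprod_eq[OF assms] by (simp add: c_def)
  have n0: "n > 0" using assms by simp
  have "(\<Prod>q\<in>prime_factors (n^c). multiplicity q (n^c) + 1) = A"
    unfolding A_def pf_pow(1)[OF n0 c0]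
    by (intro prod.cong) (auto simp: pf_pow(2)[OF n0 c0] in_prime_factors_iff)
  hence sq: "divprod (udivprod n) ^ 2 = n ^ (c * A)"
    using divprod_sq[of "n^c"] n0 t by (simp only: power_mult zero_less_power)
  have "divprod (udivprod n) = n ^ K \<longleftrightarrow> divprod (udivprod n) ^ 2 = (n ^ K) ^ 2"
    using power2_eq_iff_nonneg by blast
  also have "\<dots> \<longleftrightarrow> n ^ (c * A) = n ^ (2 * K)" by (simp only: sq power_mult[symmetric] mult.commute[of K 2])
  also have "\<dots> \<longleftrightarrow> c * A = 2 * K" using power_inject_exp[OF assms] .
  finally show ?thesis by (simp add: c_def A_def)
qed



lemma pf_prod:
  fixes S :: "nat set"
  assumes "finite S" "\<And>q. q \<in> S \<Longrightarrow> prime q" "\<And>q. q \<in> S \<Longrightarrow> f q > 0"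
  shows "prime_factors (\<Prod>q\<in>S. q ^ f q) = S"
    and "q \<in> S \<Longrightarrow> multiplicity q (\<Prod>q\<in>S. q ^ f q) = f q"
proof -
  have m: "prime r \<Longrightarrow> multiplicity r (\<Prod>q\<in>S. q ^ f q) = (if r \<in> S then f r else 0)" for r
    by (rule multiplicity_prod_prime_powers) (use assms in auto)
  show "prime_factors (\<Prod>q\<in>S. q ^ f q) = S"
    unfolding prime_factors_multiplicity
  proof (rule set_eqI)
    fix r
    show "r \<in> {p. prime p \<and> 0 < multiplicity p (\<Prod>q\<in>S. q ^ f q)} \<longleftrightarrow> r \<in> S"
    proof (cases "r \<in> S")
      case True thus ?thesis using m[of r] assms(2,3)[of r] by simp
    next
      case False thus ?thesis using m[of r] by auto
    qed
  qed
  show "q \<in> S \<Longrightarrow> multiplicity q (\<Prod>q\<in>S. q ^ f q) = f q" using m assms by simp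
qed

lemma nt2:
  fixes a b p :: nat
  assumes "prime p" "a * b = p^2" "a \<ge> 3" "b \<ge> 3"
  shows "a = p \<and> b = p"
proof -
  have "a dvd p^2" using assms(2) by (metis dvd_triv_left)
  then obtain i where i: "i \<le> 2" "a = p ^ i" using divides_primepow_nat[OF assms(1)] by blast
  have p0: "p > 0" using assms(1) prime_gt_0_nat by blast
  consider "i = 0" | "i = 1" | "i = 2" using i(1) by linarith
  thus ?thesis
  proof cases
    case 1 thus ?thesis using i assms by simp
  next
    case 2
    hence "a = p" using i by simp
    hence "p * b = p * p" using assms(2) by (simp add: power2_eq_square)
    thus ?thesis using p0 \<open>a = p\<close> by simp
  next
    case 3
    hence "p^2 * b = p^2 * 1" using i assms(2) by simp
    hence "b = 1" using p0 by (subst (asm) mult_left_cancel) simp_all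
    thus ?thesis using assms by simp
  qed
qed

lemma part3:
  fixes p n :: nat
  assumes p: "prime p" and n: "1 < n" and perf: "K_T0Tstar_perfect (p^2) n"
  shows "(\<exists>p1. prime p1 \<and> n = p1 ^ (2 * p^2 - 1))
          \<or> (odd p \<and> (\<exists>p1 p2. prime p1 \<and> prime p2 \<and> p1 \<noteq> p2 \<and>
                n = p1 ^ ((p - 1) div 2) * p2 ^ ((p - 1) div 2)))"
proof -
  define P where "P = prime_factors n"
  define k where "k = card P"
  define c :: nat where "c = 2 ^ (k - 1)"
  define A where "A = (\<Prod>q\<in>P. c * multiplicity q n + 1)"
  have eq: "c * A = 2 * p^2"
    using perf key[OF n, of "p^2"] unfolding K_T0Tstar_perfect_def c_def A_def k_def P_def by simp
  have Pne: "P \<noteq> {}" using pf_nonempty[OF n] by (simp add: P_def)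
  have finP: "finite P" by (simp add: P_def)
  hence k1: "k \<ge> 1" using Pne by (simp add: k_def Suc_le_eq card_gt_0_iff)
  have n0: "n \<noteq> 0" using n by simp
  have nrep: "n = (\<Prod>q\<in>P. q ^ multiplicity q n)"
    using prod_prime_factors[OF n0] by (simp add: P_def)
  have epos: "multiplicity q n > 0" if "q \<in> P" for q
    using that by (auto simp: P_def prime_factors_multiplicity)
  have Pprime: "prime q" if "q \<in> P" for q using that by (auto simp: P_def in_prime_factors_iff)
  consider "k = 1" | "k = 2" | "k \<ge> 3" using k1 by linarith
  thus ?thesis
  proof cases
    case 1
    have "card P = 1" using 1 k_def by simp
    then obtain q where Pq: "P = {q}" by (rule card_1_singletonE)
    have "c = 1" using 1 by (simp add: c_def)
    hence "multiplicity q n + 1 = 2 * p^2" using eq Pq by (simp add: A_def)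
    hence "multiplicity q n = 2 * p^2 - 1" by simp
    moreover have "n = q ^ multiplicity q n" using nrep Pq by simp
    ultimately show ?thesis using Pprime Pq by auto
  next
    case 2
    have "card P = 2" using 2 k_def by simp
    hence "\<exists>x y. P = {x, y} \<and> x \<noteq> y" by (rule card_2_iff[THEN iffD1])
    then obtain q1 q2 where Pq: "P = {q1, q2}" "q1 \<noteq> q2" by blast
    have "c = 2" using 2 by (simp add: c_def)
    hence ab: "(2 * multiplicity q1 n + 1) * (2 * multiplicity q2 n + 1) = p^2"
      using eq Pq by (simp add: A_def)
    have "multiplicity q1 n > 0" "multiplicity q2 n > 0" using epos Pq by auto
    hence "2 * multiplicity q1 n + 1 = p \<and> 2 * multiplicity q2 n + 1 = p"
      using nt2[OF p ab] by linarith
    hence e1: "multiplicity q1 n = (p - 1) div 2" and e2: "multiplicity q2 n = (p - 1) div 2"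
      and op: "odd p" by auto
    have nr: "n = q1 ^ multiplicity q1 n * q2 ^ multiplicity q2 n" using nrep Pq by simp
    have n12: "n = q1 ^ ((p - 1) div 2) * q2 ^ ((p - 1) div 2)" using nr unfolding e1 e2 .
    have pq1: "prime q1" and pq2: "prime q2" using Pprime Pq by auto
    show ?thesis using n12 op pq1 pq2 Pq(2) by blast
  next
    case 3
    obtain j where j: "k = j + 3" using 3 by (metis add.commute le_Suc_ex)
    have c4: "c = 4 * 2 ^ j" using j by (simp add: c_def power_add)
    hence "2 * (2 * 2 ^ j * A) = 2 * p^2" using eq by simp
    hence e2: "2 * 2 ^ j * A = p^2" by (metis mult_left_cancel zero_neq_numeral)
    hence "2 dvd p^2" by (metis dvd_triv_left mult.assoc)
    hence "2 dvd p" by (rule prime_dvd_power[OF two_is_prime_nat])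
    have "\<forall>m. m dvd p \<longrightarrow> m = 1 \<or> m = p" using p by (simp add: prime_nat_iff)
    hence "2 dvd p \<longrightarrow> (2::nat) = 1 \<or> 2 = p" by (rule spec)
    hence "(2::nat) = 1 \<or> 2 = p" using \<open>2 dvd p\<close> by (rule mp)
    hence p2: "p = 2" by simp
    obtain q where q: "q \<in> P" using Pne by blast
    define X where "X = c * multiplicity q n + 1"
    define Y where "Y = (\<Prod>q\<in>P - {q}. c * multiplicity q n + 1)"
    have AXY: "A = X * Y"
      unfolding A_def X_def Y_def by (rule prod.remove[OF finP q])
    have "Y > 0" unfolding Y_def by (intro prod_pos) simp
    hence "X * 1 \<le> X * Y" by (intro mult_le_mono2) simp
    hence "A \<ge> c * multiplicity q n + 1" using AXY X_def by simp
    moreover have "c * multiplicity q n \<ge> c" using epos[OF q] by simp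
    moreover have "c \<ge> 4" using c4 by simp
    ultimately have "A \<ge> 5" by linarith
    moreover have "2 * 2 ^ j * A \<ge> 2 * A" by simp
    ultimately have "p^2 \<ge> 10" using e2 by linarith
    thus ?thesis using p2 by simp
  qed
qed



theorem mainTheorem9:
  fixes p :: nat
  assumes "prime p"
  shows "(\<forall>p1::nat. prime p1 \<longrightarrow> K_T0Tstar_perfect (p^2) (p1 ^ (2 * p^2 - 1)))
    \<and> (odd p \<longrightarrow> (\<forall>p1 p2::nat. prime p1 \<and> prime p2 \<and> p1 \<noteq> p2 \<longrightarrow>
          K_T0Tstar_perfect (p^2) (p1 ^ ((p - 1) div 2) * p2 ^ ((p - 1) div 2))))
    \<and> (\<forall>n::nat. 1 < n \<and> K_T0Tstar_perfect (p^2) n \<longrightarrow>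
          (\<exists>p1. prime p1 \<and> n = p1 ^ (2 * p^2 - 1))
          \<or> (odd p \<and> (\<exists>p1 p2. prime p1 \<and> prime p2 \<and> p1 \<noteq> p2 \<and>
                n = p1 ^ ((p - 1) div 2) * p2 ^ ((p - 1) div 2))))"
proof (intro conjI allI impI)
  have p2: "p \<ge> 2" using assms prime_ge_2_nat by blast
  have "p * 1 \<le> p * p" using p2 by (intro mult_le_mono2) simp
  hence K2: "2 \<le> p^2" unfolding power2_eq_square using p2 by linarith
  show "K_T0Tstar_perfect (p^2) (p1 ^ (2 * p^2 - 1))" if pp: "prime p1" for p1
  proof -
    define e where "e = 2 * p^2 - 1"
    have e0: "e > 0" using K2 by (simp add: e_def)
    have nprod: "(\<Prod>q\<in>{p1}. q ^ (\<lambda>_. e) q) = p1 ^ e" by simp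
    have pf: "prime_factors (p1 ^ e) = {p1}" using pf_prod(1)[of "{p1}" "\<lambda>_. e"] pp e0 by simp
    have mu: "multiplicity p1 (p1 ^ e) = e" using pp by simp
    have n1: "1 < p1 ^ e" using pp e0 prime_gt_1_nat one_less_power by blast
    have "2 ^ (card (prime_factors (p1 ^ e)) - 1) *
      (\<Prod>q\<in>prime_factors (p1 ^ e). 2 ^ (card (prime_factors (p1 ^ e)) - 1) * multiplicity q (p1 ^ e) + 1)
       = 2 * p^2"
      unfolding pf using mu K2 by (simp add: e_def)
    hence "divprod (udivprod (p1 ^ e)) = (p1 ^ e) ^ (p^2)" using key[OF n1] by blast
    thus ?thesis using K2 n1 unfolding K_T0Tstar_perfect_def e_def by blast
  qed
  show "K_T0Tstar_perfect (p^2) (p1 ^ ((p - 1) div 2) * p2 ^ ((p - 1) div 2))"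
    if op: "odd p" and pp: "prime p1 \<and> prime p2 \<and> p1 \<noteq> p2" for p1 p2
  proof -
    define e where "e = (p - 1) div 2"
    have p3: "p \<ge> 3" using p2 op by (cases "p = 2") auto
    have e0: "e > 0" using p3 by (simp add: e_def)
    have pe: "2 * e + 1 = p" unfolding e_def using op p3 by presburger
    define n where "n = p1 ^ e * p2 ^ e"
    have nprod: "(\<Prod>q\<in>{p1,p2}. q ^ (\<lambda>_. e) q) = n" using pp by (simp add: n_def)
    have pf: "prime_factors n = {p1, p2}"
      using pf_prod(1)[of "{p1,p2}" "\<lambda>_. e"] pp e0 nprod by auto
    have mu1: "multiplicity p1 n = e" using pf_prod(2)[of "{p1,p2}" "\<lambda>_. e" p1] pp e0 nprod by auto
    have mu2: "multiplicity p2 n = e" using pf_prod(2)[of "{p1,p2}" "\<lambda>_. e" p2] pp e0 nprod by auto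
    have "1 < p1 ^ e" using pp e0 prime_gt_1_nat one_less_power by blast
    moreover have "0 < p2 ^ e" using pp prime_gt_0_nat by simp
    moreover have "p1 ^ e * 1 \<le> p1 ^ e * p2 ^ e" by (intro mult_le_mono2) (use \<open>0 < p2 ^ e\<close> in linarith)
    ultimately have n1: "1 < n" unfolding n_def by linarith
    have c2: "card (prime_factors n) = 2" using pf pp by simp
    have "2 ^ (card (prime_factors n) - 1) *
      (\<Prod>q\<in>prime_factors n. 2 ^ (card (prime_factors n) - 1) * multiplicity q n + 1)
       = 2 * p^2"
      unfolding c2 unfolding pf using mu1 mu2 pp pe by (simp add: power2_eq_square)
    hence "divprod (udivprod n) = n ^ (p^2)" using key[OF n1] by blast
    thus ?thesis using K2 n1 unfolding K_T0Tstar_perfect_def n_def e_def by blast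
  qed
  show "(\<exists>p1. prime p1 \<and> n = p1 ^ (2 * p^2 - 1))
          \<or> (odd p \<and> (\<exists>p1 p2. prime p1 \<and> prime p2 \<and> p1 \<noteq> p2 \<and>
                n = p1 ^ ((p - 1) div 2) * p2 ^ ((p - 1) div 2)))"
    if "1 < n \<and> K_T0Tstar_perfect (p^2) n" for n
    using part3[OF assms] that by blast
qed

end
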